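(* Let $M=\begin{pmatrix}\alpha&\beta\\ \beta&\gamma\end{pmatrix}\in\mathbb{Z}^{2\times2}$ be positive definite with $\det M$ a perfect square, and $Q(x)=x^TMx$. The following are equivalent: (1) $\alpha$ is a sum of two squares; (2) $Q(x)$ is a sum of two squares for all $x\in\mathbb{Z}^2$; (3) $Q(x)$ is a sum of two squares for some $x\in\mathbb{Z}^2\setminus\{0\}$. If these fail, then there is a prime $q\equiv3\pmod 4$ such that for every $x\in\mathbb{Z}^2\setminus\{0\}$ the exponent of $q$ in $Q(x)$ is odd. *)

theory Defs
  imports "HOL-Computational_Algebra.Computational_Algebra"
begin

definition sum_two_squares :: "int \<Rightarrow> bool" where
  "sum_two_squares n \<longleftrightarrow> (\<exists>a b :: int. n = a\<^sup>2 + b\<^sup>2)"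

definition qform :: "int \<Rightarrow> int \<Rightarrow> int \<Rightarrow> int \<Rightarrow> int \<Rightarrow> int" where
  "qform \<alpha> \<beta> \<gamma> x y = \<alpha> * x\<^sup>2 + 2 * \<beta> * x * y + \<gamma> * y\<^sup>2"

end

theory Submission
  imports Defs "HOL-Number_Theory.Number_Theory" "HOL-Library.Discrete_Functions"
begin

lemma s2s_mult: "sum_two_squares a \<Longrightarrow> sum_two_squares b \<Longrightarrow> sum_two_squares (a*b)"
  unfolding sum_two_squares_def
proof (elim exE)
  fix x y u v assume "a = x\<^sup>2 + y\<^sup>2" "b = u\<^sup>2 + v\<^sup>2"
  then have "a*b = (x*u - y*v)\<^sup>2 + (x*v+y*u)\<^sup>2" by (simp add: power2_eq_square algebra_simps)
  then show "\<exists>c d. a * b = c\<^sup>2 + d\<^sup>2" by blast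
qed

lemma s2s_sq: "sum_two_squares (x\<^sup>2)"
  unfolding sum_two_squares_def by (rule exI[of _ x], rule exI[of _ 0]) simp

lemma s2s_pow: "sum_two_squares a \<Longrightarrow> sum_two_squares (a^n)"
  by (induction n) (auto intro: s2s_mult simp: s2s_sq[of 1, simplified])

lemma legendre_minus_one:
  fixes q :: int
  assumes "prime q" "q > 2"
  shows "[Legendre (-1) q = (-1) ^ nat ((q - 1) div 2)] (mod q)"
proof -
  define p where "p = nat q"
  have q: "q = int p" using assms p_def prime_gt_0_int by auto
  have "prime p" using assms q by simp
  moreover have "2 < p" using assms q by simp
  ultimately have "[Legendre (-1) (int p) = (-1) ^ ((p - 1) div 2)] (mod int p)"
    by (rule euler_criterion)
  moreover have "(p - 1) div 2 = nat ((q - 1) div 2)" using q by (simp add: nat_div_distrib)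
  ultimately show ?thesis using q by simp
qed

lemma minus_one_QR:
  fixes p :: int
  assumes "prime p" "p mod 4 = 1"
  shows "\<exists>x. p dvd x\<^sup>2 + 1"
proof -
  have p2: "p > 2" using assms prime_ge_2_int[OF assms(1)] by (cases "p = 2") auto
  obtain k where k: "p = 4*k+1" using assms(2) by (metis mod_div_mult_eq add.commute mult.commute)
  have "nat ((p - 1) div 2) = 2 * nat k" using k p2 by simp
  then have "(-1::int) ^ nat ((p - 1) div 2) = 1" by simp
  then have L: "[Legendre (-1) p = 1] (mod p)" using legendre_minus_one[OF assms(1) p2] by simp
  have "Legendre (-1) p = 1"
  proof (cases "[-1 = 0] (mod p)")
    case True
    then have "p dvd 1" by (simp add: cong_0_iff)
    then show ?thesis using p2 by (auto dest: zdvd_imp_le)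
  next
    case False
    show ?thesis
    proof (rule ccontr)
      assume "Legendre (-1) p \<noteq> 1"
      then have "Legendre (-1) p = -1" using False by (simp add: Legendre_def split: if_splits)
      with L have "[-1 = 1] (mod p)" by simp
      then have "p dvd 2" by (simp add: cong_iff_dvd_diff)
      then show False using p2 zdvd_imp_le by fastforce
    qed
  qed
  then have "QuadRes p (-1)" using Legendre_def by (auto split: if_splits)
  then obtain y where "[y^2 = -1] (mod p)" by (auto simp: QuadRes_def)
  then have "p dvd y\<^sup>2 + 1" by (simp add: cong_iff_dvd_diff)
  then show ?thesis by blast
qed

lemma q3_dvd:
  fixes q a b :: int
  assumes "prime q" "q mod 4 = 3" "q dvd a\<^sup>2 + b\<^sup>2"
  shows "q dvd a"
proof (rule ccontr)
  assume na: "\<not> q dvd a"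
  have q2: "q > 2" using assms prime_ge_2_int[OF assms(1)] by (cases "q = 2") auto
  have "coprime a q" using prime_imp_coprime[OF assms(1) na] by (simp add: coprime_commute)
  then obtain c where c: "[a * c = 1] (mod q)" using cong_solve_coprime_int by blast
  have "(b*c)\<^sup>2 + 1 = (a\<^sup>2 + b\<^sup>2) * c\<^sup>2 - (a*c - 1) * (a*c + 1)"
    by (simp add: power2_eq_square algebra_simps)
  moreover have "q dvd (a*c - 1) * (a*c + 1)" using c by (simp add: cong_iff_dvd_diff)
  ultimately have "q dvd (b*c)\<^sup>2 + 1" using assms(3) by (metis dvd_diff dvd_mult2)
  then have "[(b*c)^2 = -1] (mod q)" by (simp add: cong_iff_dvd_diff)
  then have QR: "QuadRes q (-1)" by (auto simp: QuadRes_def)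
  have n1: "\<not> [-1 = 0] (mod q)"
  proof
    assume "[-1 = 0] (mod q)"
    then have "q dvd 1" by (simp add: cong_0_iff)
    then show False using q2 by (auto dest: zdvd_imp_le)
  qed
  have "Legendre (-1) q = 1" using QR n1 by (simp add: Legendre_def)
  moreover obtain k where k: "q = 4*k+3" using assms(2) by (metis mod_div_mult_eq add.commute mult.commute)
  moreover have "nat ((q - 1) div 2) = 2 * nat k + 1" using k q2 by simp
  ultimately have "[1 = -1] (mod q)" using legendre_minus_one[OF assms(1) q2] by simp
  then have "q dvd 2" by (simp add: cong_iff_dvd_diff)
  then show False using q2 zdvd_imp_le by fastforce
qed

lemma thue:
  fixes p x :: int
  assumes "prime p" "p dvd x\<^sup>2 + 1"
  shows "sum_two_squares p"
proof -
  have p0: "p > 1" using assms(1) prime_gt_1_int by blast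
  define k where "k = int (floor_sqrt (nat p))"
  have k0: "k \<ge> 0" by (simp add: k_def)
  have "int ((floor_sqrt (nat p))\<^sup>2) \<le> int (nat p)"
    by (subst of_nat_le_iff) (rule floor_sqrt_power2_le)
  then have kle: "k\<^sup>2 \<le> p" using p0 by (simp add: k_def)
  have "int (nat p) < int ((Suc (floor_sqrt (nat p)))\<^sup>2)"
    by (subst of_nat_less_iff) (rule Suc_floor_sqrt_power2_gt)
  then have kgt: "p < (k+1)\<^sup>2" using p0 by (simp add: k_def add.commute)
  have kne: "k\<^sup>2 \<noteq> p"
  proof
    assume h: "k\<^sup>2 = p"
    then have "k dvd p" by (metis dvd_triv_left power2_eq_square)
    then have "k = 1 \<or> k = p" using assms(1) k0 by (simp add: prime_int_iff)
    moreover have "p * p > p * 1" using p0 by (intro mult_strict_left_mono) auto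
    ultimately show False using h p0 by (auto simp: power2_eq_square)
  qed
  define S where "S = {0..k} \<times> {0..k}"
  define f where "f = (\<lambda>(i,j). (i - x*j) mod p)"
  have cS: "card S = nat ((k+1)\<^sup>2)" unfolding S_def using k0
    by (simp add: card_cartesian_product power2_eq_square nat_mult_distrib)
  have "f ` S \<subseteq> {0..<p}" unfolding f_def using p0 by auto
  moreover have "card {0..<p} = nat p" by simp
  moreover have "nat p < nat ((k+1)\<^sup>2)" using kgt p0 k0 by simp
  ultimately have "\<not> inj_on f S" using cS
    by (metis card_inj_on_le finite_atLeastLessThan_int leD)
  then obtain i1 j1 i2 j2 where ij: "(i1,j1) \<in> S" "(i2,j2) \<in> S" "(i1,j1) \<noteq> (i2,j2)"
      "f (i1,j1) = f (i2,j2)"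
    unfolding inj_on_def by auto
  define u where "u = i1 - i2"
  define v where "v = j1 - j2"
  have "p dvd (i1 - x*j1) - (i2 - x*j2)" using ij(4) unfolding f_def
    by (simp add: mod_eq_dvd_iff)
  then have d1: "p dvd u - x*v" unfolding u_def v_def by (simp add: algebra_simps)
  have "u\<^sup>2 + v\<^sup>2 = (u - x*v)*(u + x*v) + v\<^sup>2 * (x\<^sup>2 + 1)"
    by (simp add: power2_eq_square algebra_simps)
  then have dv: "p dvd u\<^sup>2 + v\<^sup>2" using d1 assms(2) by (metis dvd_add dvd_mult dvd_mult2)
  have "\<bar>u\<bar> \<le> k" "\<bar>v\<bar> \<le> k" using ij(1,2) unfolding S_def u_def v_def by auto
  then have "u\<^sup>2 \<le> k\<^sup>2" "v\<^sup>2 \<le> k\<^sup>2" using k0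
    by (metis abs_le_square_iff abs_of_nonneg)+
  then have "u\<^sup>2 + v\<^sup>2 < 2*p" using kle kne by linarith
  moreover have "u\<^sup>2 + v\<^sup>2 > 0" using ij(3) unfolding u_def v_def
    by (smt (verit) sum_power2_gt_zero_iff)
  moreover obtain m where m: "u\<^sup>2 + v\<^sup>2 = p * m" using dv by (auto elim: dvdE)
  ultimately have "p * m < p * 2" "p * m > p * 0" by (auto simp: mult.commute)
  then have "m < 2" "m > 0" using p0 by (simp_all add: mult_less_cancel_left_pos zero_less_mult_iff)
  then have "m = 1" by simp
  then have "u\<^sup>2 + v\<^sup>2 = p" using m by simp
  then show ?thesis unfolding sum_two_squares_def by metis
qed

lemma q3_even:
  fixes q :: int
  assumes q: "prime q" "q mod 4 = 3"
  shows "n = a\<^sup>2 + b\<^sup>2 \<Longrightarrow> n \<noteq> 0 \<Longrightarrow> even (multiplicity q n)"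
proof (induction "nat n" arbitrary: n a b rule: less_induct)
  case less
  show ?case
  proof (cases "q dvd n")
    case False
    then show ?thesis by (simp add: not_dvd_imp_multiplicity_0)
  next
    case True
    have q1: "q > 1" using q(1) prime_gt_1_int by blast
    have qab: "q dvd a\<^sup>2 + b\<^sup>2" using True less.prems(1) by simp
    have "q dvd a" using qab by (rule q3_dvd[OF q])
    moreover have "q dvd b\<^sup>2 + a\<^sup>2" using qab by (simp add: add.commute)
    then have "q dvd b" by (rule q3_dvd[OF q])
    ultimately obtain a' b' where ab: "a = q*a'" "b = q*b'" by (auto elim!: dvdE)
    define n' where "n' = a'\<^sup>2 + b'\<^sup>2"
    have nn: "n = q * (q * n')" using less.prems(1) ab unfolding n'_def
      by (simp add: power2_eq_square algebra_simps)
    have n'0: "n' \<noteq> 0" using nn less.prems(2) by auto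
    have "n' \<ge> 0" unfolding n'_def by simp
    then have n'pos: "n' > 0" using n'0 by simp
    have "n' < q * n'" using q1 n'pos by simp
    also have "q * n' < q * (q * n')" using q1 n'pos by simp
    finally have "n' < n" using nn by simp
    then have "nat n' < nat n" using n'pos by simp
    then have IH: "even (multiplicity q n')" using less.hyps[of n' a' b'] n'_def n'0 by simp
    have nu: "\<not> is_unit q" using q(1) not_prime_unit by blast
    have q0: "q \<noteq> 0" using q1 by simp
    have qn0: "q * n' \<noteq> 0" using q0 n'0 by simp
    have m1: "multiplicity q (q * (q * n')) = Suc (multiplicity q (q * n'))"
      by (rule multiplicity_times_same[OF qn0 nu q0])
    have m2: "multiplicity q (q * n') = Suc (multiplicity q n')"
      by (rule multiplicity_times_same[OF n'0 nu q0])
    have "multiplicity q n = Suc (Suc (multiplicity q n'))" unfolding nn m1 m2 ..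
    then show ?thesis using IH by simp
  qed
qed

lemma s2s_prod: "finite A \<Longrightarrow> (\<And>x. x \<in> A \<Longrightarrow> sum_two_squares (f x)) \<Longrightarrow> sum_two_squares (prod f A)"
proof (induction A rule: finite_induct)
  case empty
  then show ?case using s2s_sq[of 1] by simp
next
  case (insert x F)
  then show ?case by (simp add: s2s_mult)
qed

lemma s2s_of_even:
  fixes n :: int
  assumes "n > 0" "\<And>q. prime q \<Longrightarrow> q mod 4 = 3 \<Longrightarrow> even (multiplicity q n)"
  shows "sum_two_squares n"
proof -
  have "sum_two_squares (\<Prod>p \<in> prime_factors n. p ^ multiplicity p n)"
  proof (rule s2s_prod)
    fix p assume "p \<in> prime_factors n"
    then have p: "prime p" by (rule in_prime_factors_imp_prime)
    show "sum_two_squares (p ^ multiplicity p n)"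
    proof (cases "2 dvd p")
      case True
      have "\<forall>m. 0 \<le> m \<and> m dvd p \<longrightarrow> m = 1 \<or> m = p" using p by (simp add: prime_int_iff)
      then have "(2::int) = 1 \<or> 2 = p" using True by (metis zero_le_numeral)
      then have "p = 2" by simp
      moreover have "sum_two_squares 2" unfolding sum_two_squares_def
        by (rule exI[of _ 1], rule exI[of _ 1]) simp
      ultimately show ?thesis by (simp add: s2s_pow)
    next
      case False
      have r: "0 \<le> p mod 4" "p mod 4 < 4" by simp_all
      have r0: "p mod 4 \<noteq> 0"
      proof
        assume "p mod 4 = 0"
        then have "4 dvd p" by (simp add: dvd_eq_mod_eq_0)
        then have "2 dvd p" by (rule dvd_trans[rotated]) simp
        then show False using False by simp
      qed
      have r2: "p mod 4 \<noteq> 2"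
      proof
        assume h: "p mod 4 = 2"
        have e: "p div 4 * 4 + 2 = p" using div_mult_mod_eq[of p 4] h by linarith
        have "2 dvd p div 4 * 4 + 2" by simp
        then have "2 dvd p" unfolding e .
        then show False using False by simp
      qed
      have "p mod 4 = 1 \<or> p mod 4 = 3" using r r0 r2 by linarith
      then show ?thesis
      proof
        assume "p mod 4 = 1"
        then obtain x where "p dvd x\<^sup>2 + 1" using minus_one_QR p by blast
        then show ?thesis using thue p s2s_pow by blast
      next
        assume "p mod 4 = 3"
        then obtain k where "multiplicity p n = 2 * k" using assms(2) p by (auto elim!: evenE)
        then have "p ^ multiplicity p n = (p^k)\<^sup>2" by (simp add: power_mult power2_eq_square[symmetric] mult.commute)
        then show ?thesis using s2s_sq by simp
      qed
    qed
  qed simp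
  moreover have "(\<Prod>p \<in> prime_factors n. p ^ multiplicity p n) = n"
    using prime_factorization_int[OF assms(1)] by (rule sym)
  ultimately show ?thesis by simp
qed

theorem mainTheorem14:
  fixes \<alpha> \<beta> \<gamma> :: int
  assumes posdef: "\<alpha> > 0" "\<alpha> * \<gamma> - \<beta>\<^sup>2 > 0"
    and detsq: "\<exists>d::int. \<alpha> * \<gamma> - \<beta>\<^sup>2 = d\<^sup>2"
  shows "(sum_two_squares \<alpha> \<longleftrightarrow> (\<forall>x y. sum_two_squares (qform \<alpha> \<beta> \<gamma> x y)))
       \<and> (sum_two_squares \<alpha> \<longleftrightarrow>
            (\<exists>x y. (x, y) \<noteq> (0, 0) \<and> sum_two_squares (qform \<alpha> \<beta> \<gamma> x y)))
       \<and> (\<not> sum_two_squares \<alpha> \<longrightarrow>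
            (\<exists>q::int. prime q \<and> q mod 4 = 3 \<and>
               (\<forall>x y. (x, y) \<noteq> (0, 0) \<longrightarrow> odd (multiplicity q (qform \<alpha> \<beta> \<gamma> x y)))))"
proof -
  obtain d where d: "\<alpha> * \<gamma> - \<beta>\<^sup>2 = d\<^sup>2" using detsq by blast
  have d0: "d \<noteq> 0" using d posdef(2) by auto
  have iden: "\<alpha> * qform \<alpha> \<beta> \<gamma> x y = (\<alpha>*x+\<beta>*y)\<^sup>2 + (d*y)\<^sup>2" for x y
  proof -
    have "\<alpha> * \<gamma> = \<beta>\<^sup>2 + d\<^sup>2" using d by simp
    then have "\<alpha> * \<gamma> * y\<^sup>2 = \<beta>\<^sup>2 * y\<^sup>2 + d\<^sup>2 * y\<^sup>2" by (simp add: algebra_simps)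
    then show ?thesis unfolding qform_def by (simp add: power2_eq_square algebra_simps)
  qed
  have Qpos: "qform \<alpha> \<beta> \<gamma> x y > 0" if "(x, y) \<noteq> (0, 0)" for x y
  proof -
    have "(\<alpha>*x+\<beta>*y)\<^sup>2 + (d*y)\<^sup>2 > 0"
    proof (cases "y = 0")
      case True
      then have "x \<noteq> 0" using that by simp
      then have "\<alpha>*x+\<beta>*y \<noteq> 0" using True posdef(1) by simp
      then show ?thesis by (simp add: sum_power2_gt_zero_iff)
    next
      case False
      then have "d*y \<noteq> 0" using d0 by simp
      then show ?thesis by (simp add: sum_power2_gt_zero_iff)
    qed
    then have "\<alpha> * qform \<alpha> \<beta> \<gamma> x y > 0" using iden by simp
    then show ?thesis using posdef(1) by (simp add: zero_less_mult_iff)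
  qed
  have key: "even (multiplicity q \<alpha> + multiplicity q (qform \<alpha> \<beta> \<gamma> x y))"
    if "(x, y) \<noteq> (0, 0)" "prime q" "q mod 4 = 3" for x y q
  proof -
    have Q0: "qform \<alpha> \<beta> \<gamma> x y \<noteq> 0" using Qpos[OF that(1)] by simp
    have "even (multiplicity q (\<alpha> * qform \<alpha> \<beta> \<gamma> x y))"
      using q3_even[OF that(2,3) iden] Q0 posdef(1) by simp
    then show ?thesis
    proof -
      have a0: "\<alpha> \<noteq> 0" using posdef(1) by simp
      have "multiplicity q (\<alpha> * qform \<alpha> \<beta> \<gamma> x y) = multiplicity q \<alpha> + multiplicity q (qform \<alpha> \<beta> \<gamma> x y)"
        by (rule prime_elem_multiplicity_mult_distrib[OF prime_imp_prime_elem[OF that(2)] a0 Q0])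
      then show ?thesis using \<open>even (multiplicity q (\<alpha> * qform \<alpha> \<beta> \<gamma> x y))\<close> by simp
    qed
  qed
  have evA: "even (multiplicity q \<alpha>)" if A: "sum_two_squares \<alpha>" and qq: "prime q" "q mod 4 = 3" for q
  proof -
    obtain a b where "\<alpha> = a\<^sup>2 + b\<^sup>2" using A unfolding sum_two_squares_def by blast
    then show ?thesis by (rule q3_even[OF qq]) (use posdef(1) in simp)
  qed
  have evQ: "even (multiplicity q (qform \<alpha> \<beta> \<gamma> x y))"
    if A: "sum_two_squares (qform \<alpha> \<beta> \<gamma> x y)" and xy: "(x, y) \<noteq> (0, 0)" and qq: "prime q" "q mod 4 = 3" for x y q
  proof -
    obtain a b where "qform \<alpha> \<beta> \<gamma> x y = a\<^sup>2 + b\<^sup>2" using A unfolding sum_two_squares_def by blast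
    then show ?thesis by (rule q3_even[OF qq]) (use Qpos[OF xy] in simp)
  qed
  have Q10: "qform \<alpha> \<beta> \<gamma> 1 0 = \<alpha>" by (simp add: qform_def)
  have bad: "\<exists>q::int. prime q \<and> q mod 4 = 3 \<and> odd (multiplicity q \<alpha>)" if "\<not> sum_two_squares \<alpha>"
  proof (rule ccontr)
    assume h: "\<not> (\<exists>q::int. prime q \<and> q mod 4 = 3 \<and> odd (multiplicity q \<alpha>))"
    have "sum_two_squares \<alpha>"
    proof (rule s2s_of_even[OF posdef(1)])
      fix q :: int assume "prime q" "q mod 4 = 3"
      then show "even (multiplicity q \<alpha>)" using h by blast
    qed
    then show False using that by blast
  qed
  have P1: "sum_two_squares \<alpha> \<longleftrightarrow> (\<forall>x y. sum_two_squares (qform \<alpha> \<beta> \<gamma> x y))"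
  proof
    assume A: "sum_two_squares \<alpha>"
    show "\<forall>x y. sum_two_squares (qform \<alpha> \<beta> \<gamma> x y)"
    proof (intro allI)
      fix x y
      show "sum_two_squares (qform \<alpha> \<beta> \<gamma> x y)"
      proof (cases "(x, y) = (0, 0)")
        case True
        then show ?thesis using s2s_sq[of 0] by (simp add: qform_def)
      next
        case False
        show ?thesis
        proof (rule s2s_of_even[OF Qpos[OF False]])
          fix q :: int assume q: "prime q" "q mod 4 = 3"
          show "even (multiplicity q (qform \<alpha> \<beta> \<gamma> x y))"
            using key[OF False q] evA[OF A q] by simp
        qed
      qed
    qed
  next
    assume "\<forall>x y. sum_two_squares (qform \<alpha> \<beta> \<gamma> x y)"
    then have "sum_two_squares (qform \<alpha> \<beta> \<gamma> 1 0)" by blast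
    then show "sum_two_squares \<alpha>" unfolding Q10 .
  qed
  have P2: "sum_two_squares \<alpha> \<longleftrightarrow>
            (\<exists>x y. (x, y) \<noteq> (0, 0) \<and> sum_two_squares (qform \<alpha> \<beta> \<gamma> x y))"
  proof
    assume "sum_two_squares \<alpha>"
    then show "\<exists>x y. (x, y) \<noteq> (0, 0) \<and> sum_two_squares (qform \<alpha> \<beta> \<gamma> x y)"
      using Q10 by (intro exI[of _ 1] exI[of _ 0]) simp
  next
    assume "\<exists>x y. (x, y) \<noteq> (0, 0) \<and> sum_two_squares (qform \<alpha> \<beta> \<gamma> x y)"
    then obtain x y where xy: "(x, y) \<noteq> (0, 0)" "sum_two_squares (qform \<alpha> \<beta> \<gamma> x y)" by blast
    show "sum_two_squares \<alpha>"
    proof (rule ccontr)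
      assume "\<not> sum_two_squares \<alpha>"
      then obtain q :: int where q: "prime q" "q mod 4 = 3" "odd (multiplicity q \<alpha>)"
        using bad by blast
      have "even (multiplicity q (qform \<alpha> \<beta> \<gamma> x y))" using evQ[OF xy(2,1) q(1,2)] .
      then show False using key[OF xy(1) q(1,2)] q(3) by simp
    qed
  qed
  have P3: "\<not> sum_two_squares \<alpha> \<longrightarrow>
            (\<exists>q::int. prime q \<and> q mod 4 = 3 \<and>
               (\<forall>x y. (x, y) \<noteq> (0, 0) \<longrightarrow> odd (multiplicity q (qform \<alpha> \<beta> \<gamma> x y))))"
  proof
    assume "\<not> sum_two_squares \<alpha>"
    then obtain q :: int where q: "prime q" "q mod 4 = 3" "odd (multiplicity q \<alpha>)"
      using bad by blast
    have "\<forall>x y. (x, y) \<noteq> (0, 0) \<longrightarrow> odd (multiplicity q (qform \<alpha> \<beta> \<gamma> x y))"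
    proof (intro allI impI)
      fix x y :: int assume xy: "(x, y) \<noteq> (0, 0)"
      show "odd (multiplicity q (qform \<alpha> \<beta> \<gamma> x y))" using key[OF xy q(1,2)] q(3) by simp
    qed
    then show "\<exists>q::int. prime q \<and> q mod 4 = 3 \<and>
               (\<forall>x y. (x, y) \<noteq> (0, 0) \<longrightarrow> odd (multiplicity q (qform \<alpha> \<beta> \<gamma> x y)))"
      using q by blast
  qed
  show ?thesis by (intro conjI P1 P2 P3)
qed

end
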